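(* In the homogeneous, resource-abundant setting ($N_k=N>0$ for all $k\in[n]$, $F\ge nN$), let $\boldsymbol O^*\in\mathbb R^{\mathcal N}$ have $O^*_{\mathcal N}=N/2$ and $O^*_i=0$ for $i<\mathcal N$. Let $\boldsymbol\varepsilon\in\mathbb R^{\mathcal N}$ satisfy $\varepsilon_i\ge0$ for all $i\in[\mathcal N]$ and $\boldsymbol O^*+\boldsymbol\varepsilon\in\Omega$. Then $$T(\boldsymbol\varepsilon)\le-\boldsymbol O^{*t}M\boldsymbol\varepsilon,$$ where $T(\boldsymbol\varepsilon)=\boldsymbol l^t\boldsymbol\varepsilon+\frac12\boldsymbol\varepsilon^tM\boldsymbol\varepsilon$.
   Context: Fix an integer $n\ge2$ and write $[m]=\{1,\dots,m\}$. Let $\mathcal X$ be the collection of subsets of $[n]$ with at least two elements, $\mathcal N=2^n-n-1$, and let $I:\mathcal X\to[\mathcal N]$ be a bijection such that $A\subsetneq B$ implies $I(A)<I(B)$ (so $I([n])=\mathcal N$). Write $f(c)=|I^{-1}(c)|$, $S(c)=\{i\in[\mathcal N]:I^{-1}(c)\subseteq I^{-1}(i)\}$, $B(c)=\{i\in[\mathcal N]:I^{-1}(i)\subsetneq I^{-1}(c)\}$, and for $k\in[n]$, $\tilde S(k)=\{i\in[\mathcal N]:k\in I^{-1}(i)\}$. With effective knowledges $N_k'=\min\{N_k,F\}$ (here all equal to $N$), the objective is $$T(\boldsymbol O)=\sum_{c=1}^{\mathcal N}\frac{\sum_{a\in S(c)}O_a}{\prod_{k\in I^{-1}(c)}N_k'}\Big(\sum_{k\in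 I^{-1}(c)}N_k'-f(c)\sum_{a\in S(c)}O_a-(f(c)-1)\sum_{a\in B(c)}O_a\Big),$$ and $\boldsymbol l$, $M$ (symmetric) are the unique vector and matrix with $T(\boldsymbol O)=\boldsymbol l^t\boldsymbol O+\frac12\boldsymbol O^tM\boldsymbol O$ on $\mathbb R^{\mathcal N}$. In the homogeneous resource-abundant setting the feasible region is $\Omega=\{\boldsymbol O\in\mathbb R^{\mathcal N}:\boldsymbol O\ge\boldsymbol 0,\ \sum_{i\in\tilde S(k)}O_i\le N\ \forall k\in[n]\}$ (the resource constraint $\sum_k N_k'-\sum_c(f(c)-1)O_c\le F$ holds automatically). *)

theory Defs
  imports Complex_Main
begin

text \<open>Vectors in R^cal_N are represented as functions nat => real; only the
  entries with index in {1..cal_N} matter. Matrices are nat => nat => real.\<close>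

definition calN :: "nat \<Rightarrow> nat" where
  "calN n = 2 ^ n - n - 1"

definition calX :: "nat \<Rightarrow> nat set set" where
  "calX n = {A. A \<subseteq> {1..n} \<and> 2 \<le> card A}"

definition valid_index :: "nat \<Rightarrow> (nat set \<Rightarrow> nat) \<Rightarrow> bool" where
  "valid_index n I \<longleftrightarrow> bij_betw I (calX n) {1..calN n} \<and>
     (\<forall>A\<in>calX n. \<forall>B\<in>calX n. A \<subset> B \<longrightarrow> I A < I B)"

definition Iinv :: "nat \<Rightarrow> (nat set \<Rightarrow> nat) \<Rightarrow> nat \<Rightarrow> nat set" where
  "Iinv n I c = the_inv_into (calX n) I c"

definition fsz :: "nat \<Rightarrow> (nat set \<Rightarrow> nat) \<Rightarrow> nat \<Rightarrow> nat" where
  "fsz n I c = card (Iinv n I c)"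

definition Sset :: "nat \<Rightarrow> (nat set \<Rightarrow> nat) \<Rightarrow> nat \<Rightarrow> nat set" where
  "Sset n I c = {i \<in> {1..calN n}. Iinv n I c \<subseteq> Iinv n I i}"

definition Bset :: "nat \<Rightarrow> (nat set \<Rightarrow> nat) \<Rightarrow> nat \<Rightarrow> nat set" where
  "Bset n I c = {i \<in> {1..calN n}. Iinv n I i \<subset> Iinv n I c}"

definition Stilde :: "nat \<Rightarrow> (nat set \<Rightarrow> nat) \<Rightarrow> nat \<Rightarrow> nat set" where
  "Stilde n I k = {i \<in> {1..calN n}. k \<in> Iinv n I i}"

text \<open>Objective T with all effective knowledges equal to Np (= N' = min N F).\<close>
definition Tobj :: "nat \<Rightarrow> (nat set \<Rightarrow> nat) \<Rightarrow> real \<Rightarrow> (nat \<Rightarrow> real) \<Rightarrow> real" where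
  "Tobj n I Np x = (\<Sum>c = 1..calN n.
     (\<Sum>a\<in>Sset n I c. x a) / (\<Prod>k\<in>Iinv n I c. Np) *
     ((\<Sum>k\<in>Iinv n I c. Np) - real (fsz n I c) * (\<Sum>a\<in>Sset n I c. x a)
       - (real (fsz n I c) - 1) * (\<Sum>a\<in>Bset n I c. x a)))"

definition Omega :: "nat \<Rightarrow> (nat set \<Rightarrow> nat) \<Rightarrow> real \<Rightarrow> (nat \<Rightarrow> real) set" where
  "Omega n I N = {x. (\<forall>i\<in>{1..calN n}. 0 \<le> x i) \<and>
                     (\<forall>k\<in>{1..n}. (\<Sum>i\<in>Stilde n I k. x i) \<le> N)}"

definition Ostar :: "nat \<Rightarrow> real \<Rightarrow> nat \<Rightarrow> real" where
  "Ostar n N i = (if i = calN n then N / 2 else 0)"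

definition lin :: "nat \<Rightarrow> (nat \<Rightarrow> real) \<Rightarrow> (nat \<Rightarrow> real) \<Rightarrow> real" where
  "lin n l x = (\<Sum>i = 1..calN n. l i * x i)"

definition bilin :: "nat \<Rightarrow> (nat \<Rightarrow> real) \<Rightarrow> (nat \<Rightarrow> nat \<Rightarrow> real) \<Rightarrow> (nat \<Rightarrow> real) \<Rightarrow> real" where
  "bilin n x M y = (\<Sum>i = 1..calN n. \<Sum>j = 1..calN n. x i * M i j * y j)"

end

theory Submission
  imports Defs
begin

lemma term_ineq:
  fixes P f N s b :: real
  assumes "0 < P" "1 \<le> f" "0 \<le> s" "0 \<le> b"
  shows "s / P * (f * N - f * s - (f - 1) * b) \<le> (N/2) / P * (f * N - f * (N/2) - (f - 1) * 0)"
proof -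
  have "s * ((f - 1) * b) \<ge> 0" using assms by simp
  moreover have "f * (N/2 - s)^2 \<ge> 0" using assms by simp
  ultimately have "s * (f * N - f * s - (f - 1) * b) \<le> (N/2) * (f * N - f * (N/2) - (f - 1) * 0)"
    by (simp add: power2_eq_square algebra_simps)
  then have "(s * (f * N - f * s - (f - 1) * b)) / P \<le> ((N/2) * (f * N - f * (N/2) - (f - 1) * 0)) / P"
    using assms(1) by (intro divide_right_mono) auto
  then show ?thesis by simp
qed

lemma bilin_sym:
  assumes "\<forall>i\<in>{1..calN n}. \<forall>j\<in>{1..calN n}. M i j = M j i"
  shows "bilin n x M y = bilin n y M x"
proof -
  have "bilin n x M y = (\<Sum>j = 1..calN n. \<Sum>i = 1..calN n. x i * M i j * y j)"
    unfolding bilin_def by (rule sum.swap)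
  also have "\<dots> = bilin n y M x" unfolding bilin_def
    using assms by (intro sum.cong refl) (auto simp: mult.commute mult.left_commute)
  finally show ?thesis .
qed

lemma lin_add: "lin n l (\<lambda>i. x i + y i) = lin n l x + lin n l y"
  unfolding lin_def by (simp add: distrib_left sum.distrib)

lemma bilin_add: "bilin n (\<lambda>i. x i + y i) M (\<lambda>i. x i + y i)
   = bilin n x M x + bilin n x M y + bilin n y M x + bilin n y M y"
  unfolding bilin_def by (simp add: distrib_left distrib_right sum.distrib)

theorem mainTheorem3:
  fixes n :: nat and I :: "nat set \<Rightarrow> nat" and N F :: real
    and l :: "nat \<Rightarrow> real" and M :: "nat \<Rightarrow> nat \<Rightarrow> real" and eps :: "nat \<Rightarrow> real"
  assumes "2 \<le> n"
    and "valid_index n I"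
    and "0 < N"
    and "real n * N \<le> F"
    and "\<forall>i\<in>{1..calN n}. \<forall>j\<in>{1..calN n}. M i j = M j i"
    and "\<forall>x. Tobj n I (min N F) x = lin n l x + 1/2 * bilin n x M x"
    and "\<forall>i\<in>{1..calN n}. 0 \<le> eps i"
    and "(\<lambda>i. Ostar n N i + eps i) \<in> Omega n I N"
  shows "lin n l eps + 1/2 * bilin n eps M eps \<le> - bilin n (Ostar n N) M eps"
proof -
  define oo where "oo = Ostar n N"
  define x where "x = (\<lambda>i. oo i + eps i)"
  have n1: "1 \<le> real n" using assms(1) by simp
  have "1 * N \<le> real n * N" using n1 assms(3) by (intro mult_right_mono) auto
  then have NF: "min N F = N" using assms(4) by simp
  have bij: "bij_betw I (calX n) {1..calN n}" and mono: "\<forall>A\<in>calX n. \<forall>B\<in>calX n. A \<subset> B \<longrightarrow> I A < I B"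
    using assms(2) unfolding valid_index_def by auto
  have inj: "inj_on I (calX n)" using bij by (rule bij_betw_imp_inj_on)
  have img: "I ` calX n = {1..calN n}" using bij by (rule bij_betw_imp_surj_on)
  have Iinv_in: "Iinv n I c \<in> calX n" if "c \<in> {1..calN n}" for c
    unfolding Iinv_def using bij_betwE[OF bij_betw_the_inv_into[OF bij]] that by blast
  have full: "{1..n} \<in> calX n" using assms(1) unfolding calX_def by auto
  have Ifull: "I {1..n} = calN n"
  proof -
    have le: "I {1..n} \<in> {1..calN n}" using full img by blast
    then have "calN n \<in> {1..calN n}" by auto
    then obtain A where A: "A \<in> calX n" "I A = calN n" using img by (metis imageE)
    show ?thesis
    proof (cases "A = {1..n}")
      case True then show ?thesis using A by simp
    next
      case False
      then have "A \<subset> {1..n}" using A(1) unfolding calX_def by auto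
      then have "I A < I {1..n}" using mono A(1) full by blast
      then show ?thesis using A le by auto
    qed
  qed
  have Iinv_full: "Iinv n I (calN n) = {1..n}"
    unfolding Iinv_def using the_inv_into_f_f[OF inj full] Ifull by simp
  have calN_in: "calN n \<in> {1..calN n}" using Ifull full img by force
  have sub: "Iinv n I c \<subseteq> {1..n}" if "c \<in> {1..calN n}" for c
    using Iinv_in[OF that] unfolding calX_def by auto
  have card2: "2 \<le> card (Iinv n I c)" if "c \<in> {1..calN n}" for c
    using Iinv_in[OF that] unfolding calX_def by auto
  have fin: "finite (Iinv n I c)" if "c \<in> {1..calN n}" for c
    using sub[OF that] finite_subset by blast
  have xnn: "0 \<le> x i" if "i \<in> {1..calN n}" for i
    using assms(3,7) that unfolding x_def oo_def Ostar_def by auto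
  have Tle: "Tobj n I N x \<le> Tobj n I N oo"
    unfolding Tobj_def
  proof (rule sum_mono)
    fix c assume c: "c \<in> {1..calN n}"
    let ?P = "\<Prod>k\<in>Iinv n I c. N"
    let ?f = "real (fsz n I c)"
    have P: "0 < ?P" using assms(3) by (simp add: prod_pos)
    have f1: "1 \<le> ?f" using card2[OF c] unfolding fsz_def by simp
    have sumN: "(\<Sum>k\<in>Iinv n I c. N) = ?f * N" unfolding fsz_def by simp
    have Ssub: "Sset n I c \<subseteq> {1..calN n}" and Bsub: "Bset n I c \<subseteq> {1..calN n}"
      unfolding Sset_def Bset_def by auto
    have s0: "0 \<le> (\<Sum>a\<in>Sset n I c. x a)" using Ssub xnn by (intro sum_nonneg) auto
    have b0: "0 \<le> (\<Sum>a\<in>Bset n I c. x a)" using Bsub xnn by (intro sum_nonneg) auto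
    have inS: "calN n \<in> Sset n I c" unfolding Sset_def using calN_in sub[OF c] Iinv_full by auto
    have notB: "calN n \<notin> Bset n I c" unfolding Bset_def using sub[OF c] Iinv_full by auto
    have finS: "finite (Sset n I c)" and finB: "finite (Bset n I c)"
      using Ssub Bsub finite_subset by blast+
    have so: "(\<Sum>a\<in>Sset n I c. oo a) = N/2"
      unfolding oo_def Ostar_def using finS inS by simp
    have bo: "(\<Sum>a\<in>Bset n I c. oo a) = 0"
      unfolding oo_def Ostar_def using finB notB by simp
    show "(\<Sum>a\<in>Sset n I c. x a) / ?P * ((\<Sum>k\<in>Iinv n I c. N) - ?f * (\<Sum>a\<in>Sset n I c. x a)
       - (?f - 1) * (\<Sum>a\<in>Bset n I c. x a))
      \<le> (\<Sum>a\<in>Sset n I c. oo a) / ?P * ((\<Sum>k\<in>Iinv n I c. N) - ?f * (\<Sum>a\<in>Sset n I c. oo a)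
       - (?f - 1) * (\<Sum>a\<in>Bset n I c. oo a))"
      unfolding so bo sumN using term_ineq[OF P f1 s0 b0, of N] by simp
  qed
  have Q: "\<And>y. Tobj n I N y = lin n l y + 1/2 * bilin n y M y" using assms(6) NF by simp
  have "Tobj n I N x = Tobj n I N oo + (lin n l eps + 1/2 * bilin n eps M eps) + bilin n oo M eps"
    unfolding Q x_def lin_add bilin_add bilin_sym[OF assms(5), of eps oo] by (simp add: algebra_simps)
  with Tle show ?thesis unfolding oo_def by linarith
qed

end
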